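(* Let $\Sigma\in\mathbb R^{d\times d}$ be symmetric positive definite, $a\in\mathbb R^d$, $\lambda>0$. Let $w_t,\hat w_t$ solve the gradient flows $\frac{d}{dt}w_t=-(\Sigma w_t-a)$, $\frac{d}{dt}\hat w_t=-(\Sigma\hat w_t-a+\lambda\hat w_t)$ with $w_0=\hat w_0=0$, so $w_t=(I-e^{-\Sigma t})\Sigma^{-1}a$ and $\hat w_t=(I-e^{-(\Sigma+\lambda I)t})(\Sigma+\lambda I)^{-1}a$. With the continuous weighting scheme $P_t=1-e^{-\lambda t}$, $p_t=\lambda e^{-\lambda t}$, and $\tilde w_t=P_t^{-1}\int_0^tp_sw_s\,ds$, we have for all $t>0$ $$\hat w_t-\tilde w_t=(1-P_t)(w_t-\tilde w_t).$$
   Context: This is the gradient-flow limit of gradient descent for $L(w)=\frac12w^\top\Sigma w-w^\top a$ and its $\ell_2$-regularized version $L(w)+\frac\lambda2\|w\|_2^2$. *)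

theory Defs
  imports "HOL-Analysis.Analysis"
begin

definition sym_pos_def :: "real^'n^'n \<Rightarrow> bool" where
  "sym_pos_def S \<longleftrightarrow> transpose S = S \<and> (\<forall>x. x \<noteq> 0 \<longrightarrow> x \<bullet> (S *v x) > 0)"

end

theory Submission
  imports Defs
begin

lemma zero_sol:
  fixes h :: "real \<Rightarrow> real^'n" and M :: "real^'n^'n"
  assumes hd: "\<And>s. s\<in>{0..T} \<Longrightarrow> (h has_vector_derivative -(M *v h s + c *\<^sub>R h s)) (at s within {0..T})"
   and pos: "\<And>x. x \<bullet> (M *v x) \<ge> 0" and c: "c > 0" and h0: "h 0 = 0" and T: "T \<ge> 0"
  shows "h T = 0"
proof -
  have "\<forall>x\<in>{0..T}. ((\<lambda>s. h s \<bullet> h s) has_derivative (\<lambda>d. d *\<^sub>R (2 * (h x \<bullet> -(M *v h x + c *\<^sub>R h x))))) (at x within {0..T})"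
  proof
    fix x assume x: "x \<in> {0..T}"
    have "((\<lambda>s. h s \<bullet> h s) has_derivative (\<lambda>d. h x \<bullet> (d *\<^sub>R -(M *v h x + c *\<^sub>R h x)) + (d *\<^sub>R -(M *v h x + c *\<^sub>R h x)) \<bullet> h x)) (at x within {0..T})"
      using hd[OF x] unfolding has_vector_derivative_def by (intro has_derivative_inner) 
    then show "((\<lambda>s. h s \<bullet> h s) has_derivative (\<lambda>d. d *\<^sub>R (2 * (h x \<bullet> -(M *v h x + c *\<^sub>R h x))))) (at x within {0..T})"
      by (rule has_derivative_eq_rhs) (auto simp: inner_commute algebra_simps)
  qed
  from mvt_very_simple[OF T, of "\<lambda>s. h s \<bullet> h s", OF bspec[OF this]] obtain x where
    x: "x \<in> {0..T}" and eq: "h T \<bullet> h T - h 0 \<bullet> h 0 = (T - 0) *\<^sub>R (2 * (h x \<bullet> -(M *v h x + c *\<^sub>R h x)))"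
    by auto
  have "h x \<bullet> -(M *v h x + c *\<^sub>R h x) = - (h x \<bullet> (M *v h x)) - c * (h x \<bullet> h x)"
    by (simp add: inner_add_right inner_diff_right)
  also have "\<dots> \<le> 0" proof -
    have "0 \<le> c * (h x \<bullet> h x)" using c by simp
    then show ?thesis using pos[of "h x"] by linarith
  qed
  finally have "h T \<bullet> h T \<le> 0" using eq h0 T by (simp add: mult_nonneg_nonpos)
  then show ?thesis by (metis inner_eq_zero_iff inner_ge_zero order_antisym)
qed

lemma final_alg:
  fixes X :: "real^'n" and e :: real
  assumes "1 - e \<noteq> 0"
  shows "X + (e * inverse (1 - e)) *\<^sub>R X = X /\<^sub>R (1 - e)"
proof -
  have "1 + e * inverse (1 - e) = inverse (1 - e)" using assms by (simp add: field_simps)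
  then have "X + (e * inverse (1 - e)) *\<^sub>R X = inverse (1 - e) *\<^sub>R X"
    by (metis scaleR_left_distrib scaleR_one)
  then show ?thesis by simp
qed

theorem mainTheorem9:
  fixes Sigma :: "real^'n^'n" and a :: "real^'n" and lam :: real
    and w what :: "real \<Rightarrow> real^'n"
  assumes Sigma: "sym_pos_def Sigma"
    and lam: "lam > 0"
    and w_ode: "\<forall>t\<ge>0. (w has_vector_derivative (- (Sigma *v w t - a))) (at t within {0..})"
    and what_ode: "\<forall>t\<ge>0. (what has_vector_derivative
                       (- (Sigma *v what t - a + lam *\<^sub>R what t))) (at t within {0..})"
    and w0: "w 0 = 0" and what0: "what 0 = 0"
    and t: "t > 0"
  shows "let P = (\<lambda>s. 1 - exp (- lam * s));
             p = (\<lambda>s. lam * exp (- lam * s));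
             wt = inverse (P t) *\<^sub>R integral {0..t} (\<lambda>s. p s *\<^sub>R w s)
         in what t - wt = (1 - P t) *\<^sub>R (w t - wt)"
proof -
  define S where "S = {0..t}"
  have Ssub: "S \<subseteq> {0..}" unfolding S_def by auto
  define E where "E = (\<lambda>s::real. exp (- lam * s))"
  define f where "f = (\<lambda>s. (lam * E s) *\<^sub>R w s)"
  define I where "I = (\<lambda>u. integral {0..u} f)"
  have wd: "(w has_vector_derivative (- (Sigma *v w s - a))) (at s within S)" if "s \<in> S" for s
    using w_ode that Ssub by (auto simp: S_def intro: has_vector_derivative_within_subset)
  have whd: "(what has_vector_derivative (- (Sigma *v what s - a + lam *\<^sub>R what s))) (at s within S)" if "s \<in> S" for s
    using what_ode that Ssub by (auto simp: S_def intro: has_vector_derivative_within_subset)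
  have Ed: "(E has_real_derivative (- lam * E s)) (at s within S)" for s
    unfolding E_def by (auto intro!: derivative_eq_intros)
  have wc: "continuous_on S w"
    using wd by (auto simp: continuous_on_eq_continuous_within intro: has_vector_derivative_continuous)
  have fc: "continuous_on S f"
    unfolding f_def E_def by (intro continuous_intros wc)
  have Id: "(I has_vector_derivative f s) (at s within S)" if "s \<in> S" for s
    unfolding I_def using integral_has_vector_derivative[OF fc[unfolded S_def]] that S_def by auto
  define k where "k = (\<lambda>s. Sigma *v I s + lam *\<^sub>R I s - (1 - E s) *\<^sub>R a + (lam * E s) *\<^sub>R w s)"
  have MI: "((\<lambda>x. Sigma *v I x) has_vector_derivative Sigma *v f s) (at s within S)" if s: "s \<in> S" for s
    by (rule bounded_linear.has_vector_derivative[OF matrix_vector_mul_bounded_linear Id[OF s]])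
  have Mw: "((\<lambda>x. Sigma *v w x) has_vector_derivative Sigma *v (- (Sigma *v w s - a))) (at s within S)" if s: "s \<in> S" for s
    by (rule bounded_linear.has_vector_derivative[OF matrix_vector_mul_bounded_linear wd[OF s]])
  have kd: "(k has_vector_derivative 0) (at s within S)" if s: "s \<in> S" for s
    unfolding k_def
    apply (rule has_vector_derivative_eq_rhs)
     apply (auto intro!: derivative_eq_intros MI[OF s] Id[OF s] wd[OF s] Ed)[1]
    apply (simp add: f_def algebra_simps)
    done
  have k0: "k s = 0" if s: "s \<in> S" for s
  proof -
    have "\<forall>x\<in>S. (k has_derivative (\<lambda>h. 0)) (at x within S)"
      using kd unfolding has_vector_derivative_def by simp
    then obtain c where c: "\<forall>x\<in>S. k x = c"
      using has_derivative_zero_constant[of S k] unfolding S_def by auto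
    have "0 \<in> S" using t by (simp add: S_def)
    moreover have "k 0 = 0" by (simp add: k_def I_def E_def w0)
    ultimately show ?thesis using c s by metis
  qed
  define h where "h = (\<lambda>s. what s - E s *\<^sub>R w s - I s)"
  have hd: "(h has_vector_derivative -(Sigma *v h s + lam *\<^sub>R h s)) (at s within {0..t})" if s: "s \<in> {0..t}" for s
  proof -
    have s': "s \<in> S" using s by (simp add: S_def)
    have "(h has_vector_derivative (- (Sigma *v what s - a + lam *\<^sub>R what s))
        - (E s *\<^sub>R (- (Sigma *v w s - a)) + (- lam * E s) *\<^sub>R w s) - f s) (at s within S)"
      unfolding h_def
      by (intro has_vector_derivative_diff has_vector_derivative_scaleR whd[OF s'] wd[OF s'] Ed Id[OF s'])
    then show ?thesis unfolding S_def[symmetric]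
      apply (rule has_vector_derivative_eq_rhs)
      using k0[OF s']
      apply (simp add: h_def k_def f_def algebra_simps)
      done
  qed
  have pos: "\<And>x. x \<bullet> (Sigma *v x) \<ge> 0"
    using Sigma unfolding sym_pos_def_def by (metis inner_zero_left less_le order_refl)
  have hT: "h t = 0"
    by (rule zero_sol[OF hd pos lam]) (use t what0 w0 in \<open>simp_all add: h_def I_def E_def\<close>)
  have P: "1 - exp (- lam * t) \<noteq> 0" using lam t by simp
  show ?thesis
    using hT P unfolding Let_def h_def I_def f_def E_def
    apply (simp add: algebra_simps)
    apply (rule final_alg)
    using lam t by simp
qed

end
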